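(* Let $\Sigma=\mathbb R$. There exists a class $\mathcal F\subseteq\mathbb R^{\mathbb R^*}$ of generators $f:\mathbb R^*\to\mathbb R$ such that $\mathrm{Pdim}(\mathcal F)=1$ but $\mathrm{Pdim}(\mathcal F^{\mathrm{e2e}(T)})=\infty$, already for $T=2$.
   Context: $\mathbb R^*$ is the set of finite sequences of reals. For $f:\mathbb R^*\to\mathbb R$, $\bar f(\mathbf x)$ is $\mathbf x$ with $f(\mathbf x)$ appended; $f^{\mathrm{CoT}(T)}=\bar f^{\circ T}$; $f^{\mathrm{e2e}(T)}(\mathbf x)$ is the last entry of $f^{\mathrm{CoT}(T)}(\mathbf x)$; $\mathcal F^{\mathrm{e2e}(T)}=\{f^{\mathrm{e2e}(T)}:f\in\mathcal F\}$. Pseudo-dimension $\mathrm{Pdim}(\mathcal H)$ of a real-valued class on a domain $\mathcal X$: the largest $D$ such that there exist $\mathbf x_1,\dots,\mathbf x_D\in\mathcal X$ and thresholds $\theta_1,\dots,\theta_D\in\mathbb R$ with $|\{(\mathrm{sign}(h(\mathbf x_1)-\theta_1),\dots,\mathrm{sign}(h(\mathbf x_D)-\theta_D)):h\in\mathcal H\}|=2^D$; it is $\infty$ if no largest such $D$ exists. *)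

theory Defs
  imports Main "HOL-Library.Extended_Nat"
begin

definition append_gen :: "(real list \<Rightarrow> real) \<Rightarrow> real list \<Rightarrow> real list" where
  "append_gen f xs = xs @ [f xs]"

definition CoT :: "nat \<Rightarrow> (real list \<Rightarrow> real) \<Rightarrow> real list \<Rightarrow> real list" where
  "CoT T f = (append_gen f) ^^ T"

definition e2e :: "nat \<Rightarrow> (real list \<Rightarrow> real) \<Rightarrow> real list \<Rightarrow> real" where
  "e2e T f xs = last (CoT T f xs)"

definition e2e_class :: "nat \<Rightarrow> (real list \<Rightarrow> real) set \<Rightarrow> (real list \<Rightarrow> real) set" where
  "e2e_class T F = e2e T ` F"

text \<open>Pseudo-shattering of D points (domain = all of UNIV); sign(z) is read as the
  binary indicator z \<ge> 0.\<close>
definition pshatters :: "('a \<Rightarrow> real) set \<Rightarrow> nat \<Rightarrow> bool" where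
  "pshatters H D \<longleftrightarrow> (\<exists>(xs :: nat \<Rightarrow> 'a) (\<theta> :: nat \<Rightarrow> real).
     card ((\<lambda>h. map (\<lambda>i. \<theta> i \<le> h (xs i)) [0..<D]) ` H) = 2 ^ D)"

definition Pdim :: "('a \<Rightarrow> real) set \<Rightarrow> enat" where
  "Pdim H = Sup (enat ` {D. pshatters H D})"

end

theory Submission
  imports Defs "HOL-Library.Nat_Bijection"
begin

definition gg :: "real \<Rightarrow> real \<Rightarrow> real" where
  "gg x b = (if nat \<lfloor>x\<rfloor> \<in> set_decode (nat \<lfloor>b\<rfloor>) then 1 else 0)"

definition cc :: "real list \<Rightarrow> real" where
  "cc xs = (if length xs = 2 then gg (xs!0) (xs!1) else 0)"

definition fg :: "real \<Rightarrow> real list \<Rightarrow> real" where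
  "fg b xs = (if length xs = 1 then b else cc xs)"

definition FF :: "(real list \<Rightarrow> real) set" where
  "FF = range fg"

lemma bool_lists_card: "card {l :: bool list. length l = D} = 2 ^ D"
proof -
  have "card {l :: bool list. set l \<subseteq> UNIV \<and> length l = D} = card (UNIV :: bool set) ^ D"
    by (rule card_lists_length_eq) simp
  then show ?thesis by simp
qed

lemma bool_lists_fin: "finite {l :: bool list. length l = D}"
  using finite_lists_length_eq[of "UNIV :: bool set" D] by simp

lemma e2e_fg: "e2e 2 (fg b) [x] = gg x b"
  by (simp add: e2e_def CoT_def append_gen_def numeral_2_eq_2 fg_def cc_def)

lemma shat_e2e: "pshatters (e2e_class 2 FF) D"
proof -
  let ?xs = "\<lambda>i::nat. [real i]"
  let ?th = "\<lambda>i::nat. (1::real)"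
  have "(\<lambda>h. map (\<lambda>i. ?th i \<le> h (?xs i)) [0..<D]) ` (e2e_class 2 FF) = {l :: bool list. length l = D}"
  proof
    show "(\<lambda>h. map (\<lambda>i. ?th i \<le> h (?xs i)) [0..<D]) ` (e2e_class 2 FF) \<subseteq> {l. length l = D}"
      by auto
    show "{l. length l = D} \<subseteq> (\<lambda>h. map (\<lambda>i. ?th i \<le> h (?xs i)) [0..<D]) ` (e2e_class 2 FF)"
    proof
      fix l :: "bool list" assume l: "l \<in> {l. length l = D}"
      define S where "S = {i. i < D \<and> l ! i}"
      have fS: "finite S" unfolding S_def by simp
      define b where "b = real (set_encode S)"
      have el: "(1 \<le> gg (real i) b) = l ! i" if "i < D" for i
      proof -
        have "set_decode (nat \<lfloor>b\<rfloor>) = S" using fS by (simp add: b_def)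
        moreover have "nat \<lfloor>real i\<rfloor> = i" by simp
        ultimately show ?thesis using that by (simp add: gg_def S_def)
      qed
      have "map (\<lambda>i. ?th i \<le> e2e 2 (fg b) (?xs i)) [0..<D] = l"
      proof (rule nth_equalityI)
        show "length (map (\<lambda>i. ?th i \<le> e2e 2 (fg b) (?xs i)) [0..<D]) = length l" using l by simp
        fix i assume "i < length (map (\<lambda>i. ?th i \<le> e2e 2 (fg b) (?xs i)) [0..<D])"
        hence "i < D" by simp
        then show "map (\<lambda>i. ?th i \<le> e2e 2 (fg b) (?xs i)) [0..<D] ! i = l ! i"
          using el by (simp only: nth_map length_upt nth_upt add_0 e2e_fg diff_zero)
      qed
      moreover have "e2e 2 (fg b) \<in> e2e_class 2 FF" by (simp add: e2e_class_def FF_def)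
      ultimately show "l \<in> (\<lambda>h. map (\<lambda>i. ?th i \<le> h (?xs i)) [0..<D]) ` (e2e_class 2 FF)"
        by (intro image_eqI[where x="e2e 2 (fg b)"]) simp_all
    qed
  qed
  then have "card ((\<lambda>h. map (\<lambda>i. ?th i \<le> h (?xs i)) [0..<D]) ` (e2e_class 2 FF)) = 2 ^ D"
    using bool_lists_card by simp
  then show ?thesis unfolding pshatters_def
    apply (rule_tac exI[of _ ?xs])
    apply (rule_tac exI[of _ ?th])
    by simp
qed

lemma shat_FF: "pshatters FF D \<longleftrightarrow> D \<le> 1"
proof
  assume "D \<le> 1"
  then consider "D = 0" | "D = 1" by linarith
  then show "pshatters FF D"
  proof cases
    case 1
    have "(\<lambda>h. map (\<lambda>i. (0::real) \<le> h ((\<lambda>i. []) i)) [0..<0]) ` FF = {[]}"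
      by (auto simp: FF_def)
    hence "card ((\<lambda>h. map (\<lambda>i. (\<lambda>i. 0::real) i \<le> h ((\<lambda>i. []) i)) [0..<0]) ` FF) = 2 ^ 0"
      by simp
    then show ?thesis unfolding pshatters_def 1
      apply (rule_tac exI[of _ "\<lambda>i::nat. [] :: real list"])
      apply (rule_tac exI[of _ "\<lambda>i::nat. 0::real"])
      by simp
  next
    case 2
    let ?xs = "\<lambda>i::nat. [0::real]"
    have "(\<lambda>h. map (\<lambda>i. (1::real) \<le> h (?xs i)) [0..<1]) ` FF = {[True], [False]}"
    proof
      show "(\<lambda>h. map (\<lambda>i. (1::real) \<le> h (?xs i)) [0..<1]) ` FF \<subseteq> {[True], [False]}"
        by auto
      have "fg 1 \<in> FF" "fg 0 \<in> FF" by (auto simp: FF_def)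
      then show "{[True], [False]} \<subseteq> (\<lambda>h. map (\<lambda>i. (1::real) \<le> h (?xs i)) [0..<1]) ` FF"
      proof -
        have h1: "[True] \<in> (\<lambda>h. map (\<lambda>i. (1::real) \<le> h (?xs i)) [0..<1]) ` FF"
          by (rule image_eqI[OF _ \<open>fg 1 \<in> FF\<close>]) (simp add: fg_def)
        have h2: "[False] \<in> (\<lambda>h. map (\<lambda>i. (1::real) \<le> h (?xs i)) [0..<1]) ` FF"
          by (rule image_eqI[OF _ \<open>fg 0 \<in> FF\<close>]) (simp add: fg_def)
        show ?thesis unfolding insert_subset using h1 h2 by (intro conjI empty_subsetI)
      qed
    qed
    hence "card ((\<lambda>h. map (\<lambda>i. (\<lambda>i. 1::real) i \<le> h (?xs i)) [0..<1]) ` FF) = 2 ^ 1"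
      by simp
    then show ?thesis unfolding pshatters_def 2
      apply (rule_tac exI[of _ ?xs])
      apply (rule_tac exI[of _ "\<lambda>i::nat. 1::real"])
      by simp
  qed
next
  assume "pshatters FF D"
  then obtain xs :: "nat \<Rightarrow> real list" and th :: "nat \<Rightarrow> real" where
    c: "card ((\<lambda>h. map (\<lambda>i. th i \<le> h (xs i)) [0..<D]) ` FF) = 2 ^ D"
    unfolding pshatters_def by blast
  let ?A = "(\<lambda>h. map (\<lambda>i. th i \<le> h (xs i)) [0..<D]) ` FF"
  show "D \<le> 1"
  proof (rule ccontr)
    assume "\<not> D \<le> 1"
    hence D2: "D \<ge> 2" by simp
    have "?A \<subseteq> {l. length l = D}" by auto
    hence eq: "?A = {l. length l = D}"
      using card_subset_eq[OF bool_lists_fin] c bool_lists_card by metis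
    define l1 where "l1 = map (\<lambda>i. i = 0) [0..<D]"
    define l2 where "l2 = map (\<lambda>i. i = 1) [0..<D]"
    have "l1 \<in> ?A" "l2 \<in> ?A" using eq by (auto simp: l1_def l2_def)
    then obtain b1 b2 where
      e1: "map (\<lambda>i. th i \<le> fg b1 (xs i)) [0..<D] = l1" and
      e2: "map (\<lambda>i. th i \<le> fg b2 (xs i)) [0..<D] = l2"
      by (auto simp: FF_def)
    have n0: "0 < D" "1 < D" using D2 by auto
    have a1: "th 0 \<le> fg b1 (xs 0)" "\<not> th 1 \<le> fg b1 (xs 1)"
      using arg_cong[OF e1, of "\<lambda>l. l ! 0"] arg_cong[OF e1, of "\<lambda>l. l ! 1"] n0
      by (simp_all add: l1_def)
    have a2: "\<not> th 0 \<le> fg b2 (xs 0)" "th 1 \<le> fg b2 (xs 1)"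
      using arg_cong[OF e2, of "\<lambda>l. l ! 0"] arg_cong[OF e2, of "\<lambda>l. l ! 1"] n0
      by (simp_all add: l2_def)
    show False
    proof (cases "length (xs 0) = 1")
      case True
      show False
      proof (cases "length (xs 1) = 1")
        case True
        then show False using a1 a2 \<open>length (xs 0) = 1\<close> by (simp add: fg_def)
      next
        case False
        then show False using a1 a2 by (simp add: fg_def)
      qed
    next
      case False
      then show False using a1 a2 by (simp add: fg_def)
    qed
  qed
qed

lemma Sup_enat_UNIV: "Sup (enat ` UNIV) = \<infinity>"
proof -
  have "\<not> finite (range enat)"
    using finite_imageD[of enat UNIV] by (auto simp: inj_on_def)
  then show ?thesis by (simp add: Sup_enat_def)
qed

theorem theoremE6:
  shows "\<exists>F :: (real list \<Rightarrow> real) set. Pdim F = 1 \<and> Pdim (e2e_class 2 F) = \<infinity>"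
proof (intro exI conjI)
  have "pshatters FF D \<longleftrightarrow> D \<in> {0, 1}" for D
    unfolding shat_FF by (simp only: insert_iff empty_iff) arith
  hence "{D. pshatters FF D} = {0, 1}" by blast
  moreover have "enat ` {0, 1} = {0, 1}" by (simp add: zero_enat_def one_enat_def)
  moreover have "Sup {0, 1::enat} = 1" by (simp add: Sup_enat_def)
  ultimately show "Pdim FF = 1" unfolding Pdim_def by simp
  have "{D. pshatters (e2e_class 2 FF) D} = UNIV" using shat_e2e by auto
  then show "Pdim (e2e_class 2 FF) = \<infinity>" unfolding Pdim_def using Sup_enat_UNIV by simp
qed

end
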